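(* For any prime $p\ge5$, any integer $\alpha\ge0$ and any integer $n\ge0$, \[ b_2\!\left(p^{2\alpha+1}n+\frac{(24j+1)p^{2\alpha}-1}{24}\right)\equiv 0 \pmod 2 \] for every integer $j$ with $0\le j\le p-1$ and $\left(\frac{24j+1}{p}\right)=-1$.
   Context: For a positive integer $\ell$, $b_\ell(n)$ denotes the number of partitions of $n$ having no part divisible by $\ell$. $\left(\frac{a}{p}\right)$ is the Legendre symbol. *)

theory Defs
  imports "HOL-Number_Theory.Number_Theory" "HOL-Library.Multiset"
begin

definition b :: "nat \<Rightarrow> nat \<Rightarrow> nat" where
  "b l n = card {M :: nat multiset. (\<forall>x\<in>#M. 0 < x \<and> \<not> l dvd x) \<and> sum_mset M = n}"

end

theory Submission
  imports Defs
begin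


lemma involution_even:
  assumes "finite A" "\<forall>x\<in>A. f x \<in> A \<and> f x \<noteq> x \<and> f (f x) = x"
  shows "even (card A)"
  using assms
proof (induction "card A" arbitrary: A rule: less_induct)
  case less
  show ?case
  proof (cases "A = {}")
    case True then show ?thesis by simp
  next
    case False
    then obtain x where x: "x \<in> A" by blast
    let ?B = "A - {x, f x}"
    have fx: "f x \<in> A" "f x \<noteq> x" using less.prems x by auto
    have cB: "card A = card ?B + 2"
    proof -
      have "card ?B = card A - card {x, f x}"
        using less.prems(1) x fx by (intro card_Diff_subset) auto
      moreover have "card {x, f x} = 2" using fx by simp
      moreover have "card {x, f x} \<le> card A" using less.prems(1) x fx by (intro card_mono) auto
      ultimately show ?thesis by linarith
    qed
    have "even (card ?B)"
    proof (rule less.hyps)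
      show "card ?B < card A" using cB by simp
      show "finite ?B" using less.prems by simp
      show "\<forall>y\<in>?B. f y \<in> ?B \<and> f y \<noteq> y \<and> f (f y) = y"
      proof
        fix y assume y: "y \<in> ?B"
        then have yA: "y \<in> A" "y \<noteq> x" "y \<noteq> f x" by auto
        have fy: "f y \<in> A" "f y \<noteq> y" "f (f y) = y" using less.prems(2) yA(1) by auto
        have ffx: "f (f x) = x" using less.prems(2) x by auto
        have "f y \<noteq> x" using fy(3) yA(3) by auto
        moreover have "f y \<noteq> f x" using fy(3) ffx yA(2) by metis
        ultimately show "f y \<in> ?B \<and> f y \<noteq> y \<and> f (f y) = y" using fy by auto
      qed
    qed
    then show ?thesis using cB by simp
  qed
qed

definition v :: "nat \<Rightarrow> nat" where "v d = multiplicity (2::nat) d"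
definition od :: "nat \<Rightarrow> nat" where "od d = d div 2 ^ v d"

lemma od_v1: "d = od d * 2 ^ v d"
  unfolding od_def v_def using multiplicity_dvd[where p=2 and x=d] by auto

lemma od_v2: "0 < d \<Longrightarrow> odd (od d)"
  unfolding od_def v_def using multiplicity_decompose[where p=2 and x=d] by auto

lemma bit_le: "bit (c::nat) t \<Longrightarrow> t < c"
proof -
  assume "bit c t"
  then have "odd (c div 2 ^ t)" by (simp add: bit_iff_odd)
  then have "c div 2 ^ t \<noteq> 0" by (metis dvd_0_right)
  then have "2 ^ t \<le> c" using div_less[of c "2^t"] by (metis not_le)
  moreover have "t < 2 ^ t" by (rule less_exp)
  ultimately show "t < c" by (meson less_le_trans)
qed

lemma fin_bits: "finite {t. bit (c::nat) t}"
  by (rule finite_subset[of _ "{..<c}"]) (auto dest: bit_le)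

lemma v_od_mult: assumes "odd i" shows "v (i * 2 ^ t) = t" "od (i * 2 ^ t) = i"
proof -
  show "v (i * 2 ^ t) = t" unfolding v_def
    by (rule multiplicity_decomposeI[of _ _ _ i]) (use assms in auto)
  then show "od (i * 2 ^ t) = i" unfolding od_def by simp
qed

lemma od_pos: "0 < d \<Longrightarrow> 0 < od d" using od_v2[of d] by (cases "od d") auto

lemma od_v_inj: assumes "od d = od e" "v d = v e" shows "d = e"
proof -
  have "d = od d * 2 ^ v d" by (rule od_v1)
  also have "\<dots> = od e * 2 ^ v e" using assms by simp
  also have "\<dots> = e" by (rule od_v1[symmetric])
  finally show ?thesis .
qed

lemma sum_bits: "(\<Sum>t\<in>{t. bit (c::nat) t}. (2::nat) ^ t) = c"
proof (induction c rule: less_induct)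
  case (less c)
  show ?case
  proof (cases "c = 0")
    case True then show ?thesis by simp
  next
    case False
    have fin: "finite {t. bit (c div 2) t}"
      by (rule fin_bits)
    have eq: "{t. bit c t} = (if odd c then {0} else {}) \<union> Suc ` {t. bit (c div 2) t}"
      apply (auto simp: bit_Suc bit_0 image_iff)
      subgoal for x by (cases x) (auto simp: bit_Suc bit_0)
      subgoal for x by (cases x) (auto simp: bit_Suc bit_0)
      done
    have "(\<Sum>t\<in>{t. bit c t}. (2::nat) ^ t) = (if odd c then 1 else 0) + (\<Sum>t\<in>Suc ` {t. bit (c div 2) t}. 2 ^ t)"
    proof (cases "odd c")
      case True
      have "0 \<notin> Suc ` {t. bit (c div 2) t}" by auto
      then show ?thesis unfolding eq using True fin by simp
    next
      case False
      then show ?thesis unfolding eq by simp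
    qed
    also have "(\<Sum>t\<in>Suc ` {t. bit (c div 2) t}. (2::nat) ^ t) = 2 * (\<Sum>t\<in>{t. bit (c div 2) t}. 2 ^ t)"
      by (subst sum.reindex) (simp_all add: sum_distrib_left)
    also have "\<dots> = 2 * (c div 2)" using less.IH[of "c div 2"] False by simp
    finally have "(\<Sum>t\<in>{t. bit c t}. (2::nat) ^ t) = (if odd c then 1 else 0) + 2 * (c div 2)" .
    moreover have "(if odd c then 1 else 0) + 2 * (c div 2) = c" by presburger
    ultimately show ?thesis by (rule trans)
  qed
qed

lemma bits_sum: "finite T \<Longrightarrow> bit (\<Sum>t\<in>T. (2::nat) ^ t) n \<longleftrightarrow> n \<in> T"
proof (induction n arbitrary: T)
  case 0
  have "(\<Sum>t\<in>T. (2::nat) ^ t) = (\<Sum>t\<in>T \<inter> {0}. 2 ^ t) + (\<Sum>t\<in>T - {0}. 2 ^ t)"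
    using 0 by (rule sum.Int_Diff)
  moreover have "even (\<Sum>t\<in>T - {0}. (2::nat) ^ t)" by (intro dvd_sum) auto
  moreover have "(\<Sum>t\<in>T \<inter> {0}. (2::nat) ^ t) = (if 0 \<in> T then 1 else 0)"
    by (cases "0 \<in> T") (simp_all add: Int_insert_right)
  ultimately show ?case by (cases "0 \<in> T") (simp_all add: bit_0)
next
  case (Suc n)
  let ?T = "Suc -` T"
  have fin: "finite ?T" using Suc.prems by (simp add: finite_vimageI)
  have "T - {0} = Suc ` ?T"
  proof (intro equalityI subsetI)
    fix x assume "x \<in> T - {0}"
    then have "x = Suc (x - 1)" "x - 1 \<in> ?T" by auto
    then show "x \<in> Suc ` ?T" by blast
  qed auto
  have "(\<Sum>t\<in>T. (2::nat) ^ t) = (\<Sum>t\<in>T \<inter> {0}. 2 ^ t) + (\<Sum>t\<in>T - {0}. 2 ^ t)"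
    using Suc.prems by (rule sum.Int_Diff)
  also have "(\<Sum>t\<in>T - {0}. (2::nat) ^ t) = 2 * (\<Sum>t\<in>?T. 2 ^ t)"
  proof -
    have r: "(\<Sum>t\<in>Suc ` ?T. (2::nat)^t) = 2 * (\<Sum>t\<in>?T. 2^t)"
      by (subst sum.reindex) (simp_all add: sum_distrib_left)
    show ?thesis by (metis r \<open>T - {0} = Suc ` ?T\<close>)
  qed
  also have "(\<Sum>t\<in>T \<inter> {0}. (2::nat) ^ t) = (if 0 \<in> T then 1 else 0)"
    by (cases "0 \<in> T") (simp_all add: Int_insert_right)
  finally have eqn: "(\<Sum>t\<in>T. (2::nat) ^ t) = (if 0 \<in> T then 1 else 0) + 2 * (\<Sum>t\<in>?T. 2 ^ t)" .
  have "(\<Sum>t\<in>T. (2::nat) ^ t) div 2 = (\<Sum>t\<in>?T. 2 ^ t)"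
    unfolding eqn by (cases "0 \<in> T") simp_all
  then have "bit (\<Sum>t\<in>T. (2::nat) ^ t) (Suc n) = bit (\<Sum>t\<in>?T. (2::nat) ^ t) n"
    by (simp only: bit_Suc)
  also have "\<dots> \<longleftrightarrow> n \<in> ?T" by (rule Suc.IH[OF fin])
  finally show ?case by simp
qed



definition OddP :: "nat \<Rightarrow> nat multiset set" where
  "OddP N = {M :: nat multiset. (\<forall>x\<in>#M. 0 < x \<and> \<not> 2 dvd x) \<and> sum_mset M = N}"

definition D :: "nat \<Rightarrow> nat set set" where
  "D N = {S. finite S \<and> 0 \<notin> S \<and> \<Sum>S = N}"

definition g :: "nat set \<Rightarrow> nat multiset" where
  "g S = (\<Sum>d\<in>S. replicate_mset (2 ^ v d) (od d))"

definition h :: "nat multiset \<Rightarrow> nat set" where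
  "h M = {d. 0 < d \<and> bit (count M (od d)) (v d)}"

lemma count_g: "finite S \<Longrightarrow> count (g S) i = (\<Sum>d\<in>{d\<in>S. od d = i}. 2 ^ v d)"
  unfolding g_def count_sum by (simp add: sum.inter_filter eq_commute)

lemma sum_mset_g: "finite S \<Longrightarrow> sum_mset (g S) = \<Sum>S"
  unfolding g_def
proof (induction S rule: finite_induct)
  case (insert x F)
  have "2 ^ v x * od x = x" using od_v1[of x] by (metis mult.commute)
  with insert show ?case by simp
qed simp

lemma bit_pow_le: "bit (c::nat) t \<Longrightarrow> 2 ^ t \<le> c"
proof -
  assume "bit c t"
  then have "odd (c div 2 ^ t)" by (simp add: bit_iff_odd)
  then have "c div 2 ^ t \<noteq> 0" by (metis dvd_0_right)
  then show "2 ^ t \<le> c" using div_less[of c "2^t"] by (metis not_le)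
qed

lemma mult_count_le: "x * count M x \<le> sum_mset (M::nat multiset)"
  by (induction M) auto

lemma h_bounded: "h M \<subseteq> {..sum_mset M}"
proof
  fix d assume "d \<in> h M"
  then have d: "0 < d" "bit (count M (od d)) (v d)" unfolding h_def by auto
  have "d = od d * 2 ^ v d" by (rule od_v1)
  also have "\<dots> \<le> od d * count M (od d)" using bit_pow_le[OF d(2)] by simp
  also have "\<dots> \<le> sum_mset M" by (rule mult_count_le)
  finally show "d \<in> {..sum_mset M}" by simp
qed

lemma finite_h: "finite (h M)"
  using h_bounded finite_subset by blast

lemma h_g: assumes "finite S" "0 \<notin> S" shows "h (g S) = S"
proof (intro equalityI subsetI)
  fix d
  let ?A = "{d'\<in>S. od d' = od d}"
  have inj: "inj_on v ?A"
  proof (rule inj_onI)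
    fix x y assume "x \<in> ?A" "y \<in> ?A" "v x = v y"
    then have "od x = od y" by simp
    then show "x = y" using \<open>v x = v y\<close> by (rule od_v_inj)
  qed
  have fin: "finite (v ` ?A)" using assms by simp
  have "count (g S) (od d) = (\<Sum>d'\<in>?A. 2 ^ v d')" by (rule count_g[OF assms(1)])
  also have "\<dots> = (\<Sum>t\<in>v ` ?A. 2 ^ t)"
    using sum.reindex[OF inj, of "\<lambda>t. (2::nat) ^ t"] by (simp add: comp_def)
  finally have "count (g S) (od d) = (\<Sum>t\<in>v ` ?A. 2 ^ t)" .
  then have eq: "bit (count (g S) (od d)) (v d) \<longleftrightarrow> v d \<in> v ` ?A"
    using bits_sum[OF fin] by simp
  have eq2: "v d \<in> v ` ?A \<longleftrightarrow> d \<in> S"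
  proof
    assume "v d \<in> v ` ?A"
    then obtain d' where "d' \<in> S" "od d' = od d" "v d' = v d" by auto
    then have "d' = d" using od_v_inj by blast
    then show "d \<in> S" using \<open>d' \<in> S\<close> by simp
  next
    assume "d \<in> S" then show "v d \<in> v ` ?A" by auto
  qed
  {
    assume "d \<in> h (g S)"
    then show "d \<in> S" unfolding h_def using eq eq2 by auto
  }
  {
    assume "d \<in> S"
    then have "0 < d" using assms by (cases d) auto
    then show "d \<in> h (g S)" unfolding h_def using eq eq2 \<open>d \<in> S\<close> by auto
  }
qed

lemma g_h: assumes "\<forall>x\<in>#M. 0 < x \<and> \<not> 2 dvd x" shows "g (h M) = M"
proof (rule multiset_eqI)
  fix i
  show "count (g (h M)) i = count M i"
  proof (cases "odd i")
    case True
    then have ipos: "0 < i" by (cases i) auto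
    have set: "{d\<in>h M. od d = i} = (\<lambda>t. i * 2 ^ t) ` {t. bit (count M i) t}"
    proof (intro equalityI subsetI)
      fix d assume "d \<in> {d\<in>h M. od d = i}"
      then have "0 < d" "bit (count M i) (v d)" "od d = i" unfolding h_def by auto
      then have "d = i * 2 ^ v d" "v d \<in> {t. bit (count M i) t}" using od_v1[of d] by (metis, metis mem_Collect_eq)
      then show "d \<in> (\<lambda>t. i * 2 ^ t) ` {t. bit (count M i) t}" by (rule image_eqI)
    next
      fix d assume "d \<in> (\<lambda>t. i * 2 ^ t) ` {t. bit (count M i) t}"
      then obtain t where t: "d = i * 2 ^ t" "bit (count M i) t" by auto
      then show "d \<in> {d\<in>h M. od d = i}" unfolding h_def using v_od_mult[OF True] ipos by auto
    qed
    have inj: "inj_on (\<lambda>t. i * 2 ^ t) {t. bit (count M i) t}"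
      by (intro inj_onI) (use ipos in auto)
    have "count (g (h M)) i = (\<Sum>t\<in>{t. bit (count M i) t}. 2 ^ v (i * 2 ^ t))"
      unfolding count_g[OF finite_h] set using sum.reindex[OF inj, of "\<lambda>d. 2 ^ v d"] by simp
    also have "\<dots> = (\<Sum>t\<in>{t. bit (count M i) t}. 2 ^ t)"
      using v_od_mult[OF True] by simp
    also have "\<dots> = count M i" by (rule sum_bits)
    finally show ?thesis .
  next
    case False
    have e: "{d\<in>h M. od d = i} = {}" unfolding h_def using od_v2 False by auto
    have "count M i = 0" using assms False by (meson count_inI)
    then show ?thesis unfolding count_g[OF finite_h] e by simp
  qed
qed

lemma card_OddP_D: "card (OddP N) = card (D N)"
proof -
  have "bij_betw g (D N) (OddP N)"
  proof (rule bij_betw_byWitness[where f' = h])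
    show "\<forall>S\<in>D N. h (g S) = S" unfolding D_def using h_g by auto
    show "\<forall>M\<in>OddP N. g (h M) = M" unfolding OddP_def using g_h by auto
    show "g ` D N \<subseteq> OddP N"
    proof
      fix M assume "M \<in> g ` D N"
      then obtain S where S: "S \<in> D N" "M = g S" by auto
      have fS: "finite S" using S unfolding D_def by auto
      have "\<forall>x\<in>#M. 0 < x \<and> \<not> 2 dvd x"
      proof
        fix x assume "x \<in># M"
        then have "count (g S) x \<noteq> 0" using S by simp
        then have "{d\<in>S. od d = x} \<noteq> {}" unfolding count_g[OF fS] by (metis sum.empty)
        then obtain d where "d \<in> S" "od d = x" by blast
        moreover have "0 < d" using S \<open>d \<in> S\<close> unfolding D_def by (cases d) auto
        ultimately show "0 < x \<and> \<not> 2 dvd x" using od_v2 od_pos by auto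
      qed
      moreover have "sum_mset M = N" using S sum_mset_g unfolding D_def by auto
      ultimately show "M \<in> OddP N" unfolding OddP_def by auto
    qed
    show "h ` OddP N \<subseteq> D N"
    proof
      fix S assume "S \<in> h ` OddP N"
      then obtain M where M: "M \<in> OddP N" "S = h M" by auto
      have "\<Sum>S = sum_mset (g S)" using M finite_h sum_mset_g by auto
      also have "\<dots> = N" using M g_h unfolding OddP_def by auto
      finally have "\<Sum>S = N" .
      moreover have "0 \<notin> S" using M unfolding h_def by auto
      ultimately show "S \<in> D N" unfolding D_def using M finite_h by auto
    qed
  qed
  then show ?thesis by (metis bij_betw_same_card)
qed



definition rr :: "nat set \<Rightarrow> nat" where
  "rr S = (LEAST k. Max S - k \<notin> S)"

definition fr :: "nat set \<Rightarrow> nat set" where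
  "fr S = (if S = {} then S
     else if Min S \<le> rr S \<and> \<not> (Min S = rr S \<and> Max S + 1 = 2 * rr S)
       then insert (Max S + 1) (S - {Min S, Max S + 1 - Min S})
     else if rr S < Min S \<and> \<not> (Min S = rr S + 1 \<and> Max S = 2 * rr S)
       then insert (Max S - rr S) (insert (rr S) (S - {Max S}))
     else S)"

lemma fr_A: assumes "S \<noteq> {}" "Min S \<le> rr S \<and> \<not> (Min S = rr S \<and> Max S + 1 = 2 * rr S)"
  shows "fr S = insert (Max S + 1) (S - {Min S, Max S + 1 - Min S})"
  unfolding fr_def using assms by (simp only: if_True if_False simp_thms)

lemma fr_B: assumes "S \<noteq> {}" "\<not> (Min S \<le> rr S \<and> \<not> (Min S = rr S \<and> Max S + 1 = 2 * rr S))"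
   "rr S < Min S \<and> \<not> (Min S = rr S + 1 \<and> Max S = 2 * rr S)"
  shows "fr S = insert (Max S - rr S) (insert (rr S) (S - {Max S}))"
  unfolding fr_def using assms by (simp only: if_True if_False simp_thms)

lemma fr_C: assumes "\<not> (Min S \<le> rr S \<and> \<not> (Min S = rr S \<and> Max S + 1 = 2 * rr S))"
   "\<not> (rr S < Min S \<and> \<not> (Min S = rr S + 1 \<and> Max S = 2 * rr S))"
  shows "fr S = S"
  unfolding fr_def using assms by (simp only: if_True if_False simp_thms if_cancel)

lemma sum_interval: "2 * \<Sum>{a..<a + k} + k = k * (2 * a + (k::nat))"
  by (induction k) (auto simp: algebra_simps)

locale fset =
  fixes S :: "nat set"
  assumes fin: "finite S" and ne: "S \<noteq> {}" and nz: "0 \<notin> S"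
begin

lemma basic: "Min S \<in> S" "Max S \<in> S" "\<And>x. x \<in> S \<Longrightarrow> Min S \<le> x" "\<And>x. x \<in> S \<Longrightarrow> x \<le> Max S"
  "1 \<le> Min S"
  using fin ne nz apply auto
  by (metis Min_in fin ne not_less_eq_eq le0 le_antisym)

lemma rr_props: "Max S - rr S \<notin> S" "rr S \<le> Max S" "\<And>j. j < rr S \<Longrightarrow> Max S - j \<in> S" "1 \<le> rr S"
proof -
  have ex: "Max S - Max S \<notin> S" using nz by simp
  show "Max S - rr S \<notin> S" unfolding rr_def by (rule LeastI[of _ "Max S"]) (rule ex)
  show "rr S \<le> Max S" unfolding rr_def by (rule Least_le) (rule ex)
  show "\<And>j. j < rr S \<Longrightarrow> Max S - j \<in> S" unfolding rr_def using not_less_Least by blast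
  show "1 \<le> rr S"
  proof (rule ccontr)
    assume "\<not> 1 \<le> rr S"
    then have "rr S = 0" by simp
    then show False using \<open>Max S - rr S \<notin> S\<close> basic(2) by simp
  qed
qed

lemma rr_ge: assumes "\<And>j. j < k \<Longrightarrow> Max S - j \<in> S" shows "k \<le> rr S"
proof (rule ccontr)
  assume "\<not> k \<le> rr S"
  then have "rr S < k" by simp
  then have "Max S - rr S \<in> S" using assms by blast
  then show False using rr_props(1) by simp
qed

lemma rr_le: assumes "Max S - k \<notin> S" shows "rr S \<le> k"
  unfolding rr_def by (rule Least_le) (rule assms)

lemma caseA:
  assumes s: "s = Min S" and m: "m = Max S" and r: "r = rr S"
    and CA: "s \<le> r" "\<not> (s = r \<and> m + 1 = 2 * r)"
    and T: "T = insert (m + 1) (S - {s, m + 1 - s})"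
  shows "finite T" "0 \<notin> T" "\<Sum>T = \<Sum>S" "T \<noteq> S" "fr T = S"
proof -
  have sS: "s \<in> S" "m \<in> S" "\<And>x. x \<in> S \<Longrightarrow> s \<le> x" "\<And>x. x \<in> S \<Longrightarrow> x \<le> m" "1 \<le> s"
    using basic s m by auto
  have r1: "1 \<le> r" "r \<le> m" "m - r \<notin> S" "\<And>j. j < r \<Longrightarrow> m - j \<in> S"
    using rr_props r m by auto
  have a1: "m + 1 - r \<in> S"
  proof -
    have "m - (r - 1) \<in> S" by (rule r1(4)) (use r1(1) in linarith)
    moreover have "m - (r - 1) = m + 1 - r" using r1 by simp
    ultimately show ?thesis by simp
  qed
  have a2: "s \<le> m + 1 - r" using a1 sS by blast
  have a3: "s < m + 1 - s" using a2 CA r1 by linarith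
  have a4: "m + 1 - s \<in> S"
  proof -
    have "m - (s - 1) \<in> S" by (rule r1(4)) (use CA sS in linarith)
    moreover have "m - (s - 1) = m + 1 - s" using sS a3 by linarith
    ultimately show ?thesis by simp
  qed
  have a5: "m + 1 \<notin> S" using sS by fastforce
  define R where "R = S - {s, m + 1 - s}"
  have finR: "finite R" using fin R_def by simp
  have TR: "T = insert (m + 1) R" using T R_def by simp
  have SR: "S = insert s (insert (m + 1 - s) R)" using R_def sS a4 by auto
  show "finite T" using TR finR by simp
  show "0 \<notin> T" using TR R_def nz by simp
  have n1: "s \<notin> insert (m + 1 - s) R" using R_def a3 by auto
  have n2: "m + 1 - s \<notin> R" using R_def by auto
  have "\<Sum>(insert s (insert (m + 1 - s) R)) = s + ((m + 1 - s) + \<Sum>R)"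
    using finR n1 n2 by simp
  then have "\<Sum>S = s + ((m + 1 - s) + \<Sum>R)" using SR by simp
  moreover have "\<Sum>T = (m + 1) + \<Sum>R" using TR finR a5 R_def by simp
  ultimately show "\<Sum>T = \<Sum>S" using a3 by simp
  show "T \<noteq> S" using TR a5 by auto
  interpret T: fset T using TR finR nz R_def by unfold_locales auto
  have maxT: "Max T = m + 1"
  proof (rule Max_eqI)
    show "finite T" using TR finR by simp
    show "m + 1 \<in> T" using TR by simp
    fix y assume "y \<in> T"
    then have "y = m + 1 \<or> y \<in> S" using TR R_def by auto
    then show "y \<le> m + 1" using sS(4) by fastforce
  qed
  have Tgt: "\<And>x. x \<in> T \<Longrightarrow> s < x"
  proof -
    fix x assume "x \<in> T"
    then show "s < x" using TR R_def sS a3 by (auto simp: le_neq_implies_less)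
  qed
  have minT: "s < Min T" using Tgt T.basic(1) by blast
  have "s \<le> rr T"
  proof (rule T.rr_ge)
    fix j assume j: "j < s"
    show "Max T - j \<in> T"
    proof (cases "j = 0")
      case True then show ?thesis using maxT TR by simp
    next
      case False
      have "m - (j - 1) \<in> S" by (rule r1(4)) (use j CA in linarith)
      moreover have "m - (j - 1) = Max T - j" using maxT False j sS by simp
      moreover have "Max T - j \<noteq> s" "Max T - j \<noteq> m + 1 - s" using maxT j a3 by auto
      ultimately show ?thesis using TR R_def by auto
    qed
  qed
  moreover have "rr T \<le> s"
  proof (rule T.rr_le)
    show "Max T - s \<notin> T" using maxT TR R_def sS by auto
  qed
  ultimately have rrT: "rr T = s" by simp
  have c1: "\<not> (Min T \<le> rr T \<and> \<not> (Min T = rr T \<and> Max T + 1 = 2 * rr T))"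
    using minT rrT by simp
  have c2: "rr T < Min T \<and> \<not> (Min T = rr T + 1 \<and> Max T = 2 * rr T)"
    using minT rrT maxT a3 by auto
  have "fr T = insert (Max T - rr T) (insert (rr T) (T - {Max T}))"
    unfolding fr_def using T.ne c1 c2 by simp
  also have "\<dots> = S"
  proof -
    have "T - {m + 1} = R" using TR R_def a5 by auto
    then have "insert (Max T - rr T) (insert (rr T) (T - {Max T})) = insert (m + 1 - s) (insert s R)"
      unfolding maxT rrT by simp
    also have "\<dots> = S" using SR by auto
    finally show ?thesis .
  qed
  finally show "fr T = S" .
qed

lemma caseB:
  assumes s: "s = Min S" and m: "m = Max S" and r: "r = rr S"
    and CB: "r < s" "\<not> (s = r + 1 \<and> m = 2 * r)"
    and T: "T = insert (m - r) (insert r (S - {m}))"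
  shows "finite T" "0 \<notin> T" "\<Sum>T = \<Sum>S" "T \<noteq> S" "fr T = S"
proof -
  have sS: "s \<in> S" "m \<in> S" "\<And>x. x \<in> S \<Longrightarrow> s \<le> x" "\<And>x. x \<in> S \<Longrightarrow> x \<le> m" "1 \<le> s"
    using basic s m by auto
  have r1: "1 \<le> r" "r \<le> m" "m - r \<notin> S" "\<And>j. j < r \<Longrightarrow> m - j \<in> S"
    using rr_props r m by auto
  have a1: "m + 1 - r \<in> S"
  proof -
    have "m - (r - 1) \<in> S" by (rule r1(4)) (use r1(1) in linarith)
    moreover have "m - (r - 1) = m + 1 - r" using r1 by simp
    ultimately show ?thesis by simp
  qed
  have a2: "s \<le> m + 1 - r" using a1 sS by blast
  have b2: "r < m - r" using a2 CB r1 by linarith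
  have b3: "r \<notin> S" using sS CB by fastforce
  define R where "R = S - {m}"
  have finR: "finite R" using fin R_def by simp
  have TR: "T = insert (m - r) (insert r R)" using T R_def by simp
  have SR: "S = insert m R" using R_def sS by auto
  have mR: "m \<notin> R" "r \<notin> R" "m - r \<notin> R" using R_def b3 r1 by auto
  show "finite T" using TR finR by simp
  show "0 \<notin> T" using TR R_def nz b2 r1 by auto
  have "\<Sum>S = m + \<Sum>R" using SR finR mR by simp
  moreover have "\<Sum>T = (m - r) + (r + \<Sum>R)" using TR finR mR b2 by simp
  ultimately show "\<Sum>T = \<Sum>S" using b2 by simp
  show "T \<noteq> S" using TR b3 by auto
  interpret T: fset T using TR finR nz R_def b2 r1 by unfold_locales auto
  have maxT: "Max T = m - 1"
  proof (rule Max_eqI)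
    show "finite T" using TR finR by simp
    show "m - 1 \<in> T"
    proof (cases "r = 1")
      case True then show ?thesis using TR by simp
    next
      case False
      then have "m - 1 \<in> S" using r1 by (intro r1(4)) simp
      moreover have "m - 1 \<noteq> m" using r1 by simp
      ultimately show ?thesis using TR R_def by simp
    qed
    fix y assume "y \<in> T"
    then have "y = m - r \<or> y = r \<or> (y \<in> S \<and> y \<noteq> m)" using TR R_def by auto
    then show "y \<le> m - 1" using sS(4) r1 b2 by fastforce
  qed
  have minT: "Min T = r"
  proof (rule Min_eqI)
    show "finite T" using TR finR by simp
    show "r \<in> T" using TR by simp
    fix y assume "y \<in> T"
    then have "y = m - r \<or> y = r \<or> y \<in> S" using TR R_def by auto
    then show "r \<le> y" using sS(3) CB b2 by fastforce
  qed
  have rrT: "r \<le> rr T"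
  proof (rule T.rr_ge)
    fix j assume j: "j < r"
    show "Max T - j \<in> T"
    proof (cases "j = r - 1")
      case True
      then have "Max T - j = m - r" using maxT r1 b2 by simp
      then show ?thesis using TR by simp
    next
      case False
      have "m - (j + 1) \<in> S" by (rule r1(4)) (use j False in linarith)
      moreover have "m - (j + 1) = Max T - j" using maxT by simp
      moreover have "m - (j + 1) \<noteq> m" using j r1 by simp
      ultimately show ?thesis using TR R_def by auto
    qed
  qed
  have c1: "Min T \<le> rr T \<and> \<not> (Min T = rr T \<and> Max T + 1 = 2 * rr T)"
    using minT rrT maxT b2 by auto
  have "fr T = insert (Max T + 1) (T - {Min T, Max T + 1 - Min T})"
    by (rule fr_A[OF T.ne c1])
  also have "\<dots> = S"
  proof -
    have m1: "Max T + 1 = m" using maxT b2 by simp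
    have "T - {r, m - r} = R" using TR mR b2 by auto
    then have "insert (Max T + 1) (T - {Min T, Max T + 1 - Min T}) = insert m R"
      unfolding m1 minT by simp
    also have "\<dots> = S" using SR by simp
    finally show ?thesis .
  qed
  finally show "fr T = S" .
qed

lemma fixed_case:
  assumes s: "s = Min S" and m: "m = Max S" and r: "r = rr S"
    and C1: "\<not> (s \<le> r \<and> \<not> (s = r \<and> m + 1 = 2 * r))"
    and C2: "\<not> (r < s \<and> \<not> (s = r + 1 \<and> m = 2 * r))"
  shows "\<exists>k. 24 * \<Sum>S + 1 = k ^ 2"
proof -
  have sS: "s \<in> S" "m \<in> S" "\<And>x. x \<in> S \<Longrightarrow> s \<le> x" "\<And>x. x \<in> S \<Longrightarrow> x \<le> m" "1 \<le> s"
    using basic s m by auto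
  have r1: "1 \<le> r" "r \<le> m" "m - r \<notin> S" "\<And>j. j < r \<Longrightarrow> m - j \<in> S"
    using rr_props r m by auto
  show ?thesis
  proof (cases "s \<le> r")
    case True
    then have sr: "s = r" "m + 1 = 2 * r" using C1 by auto
    have SI: "S = {r..<r + r}"
    proof (intro equalityI subsetI)
      fix x assume "x \<in> S"
      then show "x \<in> {r..<r + r}" using sS(3,4) sr by fastforce
    next
      fix x assume x: "x \<in> {r..<r + r}"
      have "m - (m - x) \<in> S" by (rule r1(4)) (use x sr in auto)
      moreover have "m - (m - x) = x" using x sr by auto
      ultimately show "x \<in> S" by simp
    qed
    define X where "X = \<Sum>S"
    have e: "2 * X + r = r * (2 * r + r)" unfolding X_def SI by (rule sum_interval)
    have h: "2 * int X + int r = 3 * (int r * int r)" using arg_cong[OF e, of int] by (simp add: algebra_simps)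
    have "(6 * int r - 1) ^ 2 = 36 * (int r * int r) - 12 * int r + 1"
      by (simp add: power2_eq_square algebra_simps)
    then have "int (24 * X + 1) = (6 * int r - 1) ^ 2" using h by simp
    also have "\<dots> = int ((6 * r - 1) ^ 2)" using r1(1) by (simp add: of_nat_diff)
    finally have "24 * X + 1 = (6 * r - 1) ^ 2" by (simp only: of_nat_eq_iff)
    then show ?thesis unfolding X_def by blast
  next
    case False
    then have sr: "s = r + 1" "m = 2 * r" using C2 by auto
    have SI: "S = {r + 1..<(r + 1) + r}"
    proof (intro equalityI subsetI)
      fix x assume "x \<in> S"
      then show "x \<in> {r + 1..<(r + 1) + r}" using sS(3,4) sr by fastforce
    next
      fix x assume x: "x \<in> {r + 1..<(r + 1) + r}"
      have "m - (m - x) \<in> S" by (rule r1(4)) (use x sr in auto)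
      moreover have "m - (m - x) = x" using x sr by auto
      ultimately show "x \<in> S" by simp
    qed
    define X where "X = \<Sum>S"
    have e: "2 * X + r = r * (2 * (r + 1) + r)" unfolding X_def SI by (rule sum_interval)
    have h: "2 * int X = 3 * (int r * int r) + int r" using arg_cong[OF e, of int] by (simp add: algebra_simps)
    have "(6 * int r + 1) ^ 2 = 36 * (int r * int r) + 12 * int r + 1"
      by (simp add: power2_eq_square algebra_simps)
    then have "int (24 * X + 1) = (6 * int r + 1) ^ 2" using h by simp
    also have "\<dots> = int ((6 * r + 1) ^ 2)" by simp
    finally have "24 * X + 1 = (6 * r + 1) ^ 2" by (simp only: of_nat_eq_iff)
    then show ?thesis unfolding X_def by blast
  qed
qed

end

lemma fr_D:
  assumes "S \<in> D N"
  shows "fr S \<in> D N \<and> fr (fr S) = S \<and> (fr S = S \<longrightarrow> (\<exists>k. 24 * N + 1 = k ^ 2))"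
proof (cases "S = {}")
  case True
  then have "N = 0" using assms unfolding D_def by auto
  moreover have "fr S = S" using True unfolding fr_def by simp
  ultimately show ?thesis using assms by (auto intro: exI[of _ 1])
next
  case False
  have SD: "finite S" "0 \<notin> S" "\<Sum>S = N" using assms unfolding D_def by auto
  interpret fset S using SD False by unfold_locales auto
  define s m r where "s = Min S" and "m = Max S" and "r = rr S"
  show ?thesis
  proof (cases "s \<le> r \<and> \<not> (s = r \<and> m + 1 = 2 * r)")
    case CA: True
    define T where "T = insert (m + 1) (S - {s, m + 1 - s})"
    note A = caseA[OF s_def m_def r_def conjunct1[OF CA] conjunct2[OF CA] T_def]
    have "fr S = T" unfolding T_def s_def m_def r_def using CA unfolding s_def m_def r_def by (intro fr_A[OF False])
    then show ?thesis using A SD unfolding D_def by auto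
  next
    case nCA: False
    show ?thesis
    proof (cases "r < s \<and> \<not> (s = r + 1 \<and> m = 2 * r)")
      case CB: True
      define T where "T = insert (m - r) (insert r (S - {m}))"
      note B = caseB[OF s_def m_def r_def conjunct1[OF CB] conjunct2[OF CB] T_def]
      have "fr S = T" unfolding T_def s_def m_def r_def using nCA CB unfolding s_def m_def r_def by (intro fr_B[OF False])
      then show ?thesis using B SD unfolding D_def by auto
    next
      case nCB: False
      have "fr S = S" using nCA nCB unfolding s_def m_def r_def by (intro fr_C)
      moreover have "\<exists>k. 24 * \<Sum>S + 1 = k ^ 2" by (rule fixed_case[OF s_def m_def r_def nCA nCB])
      ultimately show ?thesis using SD(3) assms by auto
    qed
  qed
qed

lemma finite_D: "finite (D N)"
proof (rule finite_subset[of _ "Pow {..N}"])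
  show "D N \<subseteq> Pow {..N}"
  proof
    fix S assume "S \<in> D N"
    then have "finite S" "\<Sum>S = N" unfolding D_def by auto
    then show "S \<in> Pow {..N}" using member_le_sum[of _ S id] by auto
  qed
qed simp

lemma even_b2:
  assumes "\<not> (\<exists>k. 24 * N + 1 = k ^ 2)"
  shows "even (b 2 N)"
proof -
  have "b 2 N = card (OddP N)" unfolding b_def OddP_def by simp
  also have "\<dots> = card (D N)" by (rule card_OddP_D)
  finally have eq: "b 2 N = card (D N)" .
  have "even (card (D N))"
    by (rule involution_even[of _ fr]) (use finite_D fr_D assms in blast)+
  then show ?thesis using eq by simp
qed



lemma sq_mod24: fixes r :: nat assumes "r < 24" "\<not> 2 dvd r" "\<not> 3 dvd r" shows "r^2 mod 24 = 1"
proof -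
  have "r \<in> {..<24}" using assms by simp
  then show ?thesis using assms by (auto simp: lessThan_nat_numeral lessThan_Suc)
qed

lemma p_sq_mod24: fixes p :: nat assumes "prime p" "p \<ge> 5" shows "[int p ^ 2 = 1] (mod 24)"
proof -
  have n2: "\<not> 2 dvd p"
  proof
    assume "2 dvd p" then have "2 = p" using assms(1) by (auto simp: prime_nat_iff)
    then show False using assms by simp
  qed
  have n3: "\<not> 3 dvd p"
  proof
    assume "3 dvd p" then have "3 = p" using assms(1) by (auto simp: prime_nat_iff)
    then show False using assms by simp
  qed
  have "\<not> 2 dvd (p mod 24)" using n2 by (simp add: dvd_mod_iff)
  moreover have "\<not> 3 dvd (p mod 24)" using n3 by (simp add: dvd_mod_iff)
  ultimately have "(p mod 24)^2 mod 24 = 1" by (intro sq_mod24) auto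
  then have "p^2 mod 24 = 1" by (simp add: power_mod)
  then have "[p ^ 2 = 1] (mod 24)" by (simp add: cong_def)
  then show ?thesis by (metis cong_int_iff of_nat_1 of_nat_power of_nat_numeral)
qed

lemma nt_main:
  fixes p \<alpha> n :: nat and j :: int
  assumes p: "prime p" "p \<ge> 5" and j: "0 \<le> j" and L: "Legendre (24 * j + 1) (int p) = -1"
  defines "E \<equiv> int p ^ (2 * \<alpha> + 1) * int n + ((24 * j + 1) * int p ^ (2 * \<alpha>) - 1) div 24"
  shows "\<not> (\<exists>k. 24 * nat E + 1 = k ^ 2)"
proof
  assume "\<exists>k. 24 * nat E + 1 = k ^ 2"
  then obtain k where k: "24 * nat E + 1 = k ^ 2" by blast
  define P where "P = int p ^ (2 * \<alpha>)"
  define X where "X = 24 * int p * int n + 24 * j + 1"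
  have Ppos: "P \<ge> 1" unfolding P_def using p by simp
  have "[(int p ^ 2) ^ \<alpha> = 1 ^ \<alpha>] (mod 24)"
    by (intro cong_pow p_sq_mod24[OF p])
  then have P1: "[P = 1] (mod 24)" unfolding P_def by (simp add: power_mult)
  have "[(24 * j + 1) * P = (24 * j + 1) * 1] (mod 24)" by (intro cong_mult cong_refl P1)
  moreover have "[(24 * j + 1) * 1 = 1] (mod 24)" by (simp add: cong_def)
  ultimately have "[(24 * j + 1) * P = 1] (mod 24)" by (rule cong_trans)
  then have dv: "24 dvd ((24 * j + 1) * P - 1)" by (simp add: cong_iff_dvd_diff)
  have nn: "0 \<le> (24 * j + 1) * P - 1" 
  proof -
    have "1 * 1 \<le> (24 * j + 1) * P" using j Ppos by (intro mult_mono) auto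
    then show ?thesis by simp
  qed
  have E_eq: "E = int p ^ (2 * \<alpha> + 1) * int n + ((24 * j + 1) * P - 1) div 24" unfolding E_def P_def by simp
  have E_nn: "0 \<le> E" unfolding E_eq using nn by simp
  have "24 * E + 1 = 24 * (int p ^ (2 * \<alpha> + 1) * int n) + ((24 * j + 1) * P - 1) + 1"
    unfolding E_eq using dv by (simp add: algebra_simps)
  also have "\<dots> = P * X" unfolding X_def P_def by (simp add: algebra_simps)
  finally have eqPX: "24 * E + 1 = P * X" .
  have k2: "(int k) ^ 2 = P * X"
  proof -
    have "int (24 * nat E + 1) = int (k ^ 2)" using k by simp
    then show ?thesis using E_nn eqPX by simp
  qed
  have "(int p ^ \<alpha>) ^ 2 dvd (int k) ^ 2" unfolding k2 P_def by (simp add: power_mult[symmetric] mult.commute)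
  then have "int p ^ \<alpha> dvd int k" by simp
  then obtain c where c: "int k = int p ^ \<alpha> * c" by blast
  have "P * c ^ 2 = P * X" using k2 c unfolding P_def by (simp add: power_mult_distrib power_mult[symmetric] mult.commute)
  then have Xc: "X = c ^ 2" using Ppos by simp
  have "[X = 24 * j + 1] (mod int p)" unfolding X_def by (simp add: cong_iff_dvd_diff)
  then have "[c ^ 2 = 24 * j + 1] (mod int p)" using Xc by simp
  then have "QuadRes (int p) (24 * j + 1)" unfolding QuadRes_def by blast
  then have "Legendre (24 * j + 1) (int p) \<noteq> -1" unfolding Legendre_def by auto
  then show False using L by simp
qed


theorem theorem3p3:
  fixes p :: nat and \<alpha> n :: nat and j :: int
  assumes "prime p" and "p \<ge> 5"
    and "0 \<le> j" and "j \<le> int p - 1"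
    and "Legendre (24 * j + 1) (int p) = -1"
  shows "even (b 2 (nat (int p ^ (2 * \<alpha> + 1) * int n + ((24 * j + 1) * int p ^ (2 * \<alpha>) - 1) div 24)))"
  by (rule even_b2) (rule nt_main[OF assms(1,2,3,5)])

end
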